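(* For every $M\geq 1$, $$g(M)=\sum_{0\leq 2n\leq M-1}(M-2n)\binom{M-n-1}{n}.$$
   Context: The perimeter of a nonempty partition $\lambda$ with largest part $\lambda_1$ and $\ell(\lambda)$ parts is $\lambda_1+\ell(\lambda)-1$. $g(M)$ is the total number of parts, summed over all partitions into odd parts with perimeter $M$. *)

theory Defs
  imports Main
begin

text \<open>A partition is represented as a list of positive parts in non-increasing order.
  Its largest part is the head, its number of parts is the length.\<close>

definition is_partition :: "nat list \<Rightarrow> bool" where
  "is_partition xs \<longleftrightarrow> sorted_wrt (\<ge>) xs \<and> (\<forall>x\<in>set xs. 0 < x)"

definition perimeter :: "nat list \<Rightarrow> nat" where
  "perimeter xs = hd xs + length xs - 1"

definition odd_parts_perimeter :: "nat \<Rightarrow> nat list set" where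
  "odd_parts_perimeter M = {xs. xs \<noteq> [] \<and> is_partition xs \<and> (\<forall>x\<in>set xs. odd x) \<and> perimeter xs = M}"

definition g :: "nat \<Rightarrow> nat" where
  "g M = (\<Sum>xs\<in>odd_parts_perimeter M. length xs)"

end

theory Submission
  imports Defs
begin

definition D :: "nat \<Rightarrow> nat \<Rightarrow> nat list set" where
  "D k n = {ys. length ys = n \<and> sorted_wrt (\<ge>) ys \<and> (\<forall>x\<in>set ys. odd x \<and> x \<le> 2*k+1)}"

lemma D_0: "D k 0 = {[]}"
  unfolding D_def by auto

lemma D_fin: "finite (D k n)"
proof -
  have "D k n \<subseteq> {ys. set ys \<subseteq> {..2*k+1} \<and> length ys = n}"
    unfolding D_def by auto
  moreover have "finite {ys. set ys \<subseteq> {..2*k+1} \<and> length ys = n}"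
    by (rule finite_lists_length_eq) simp
  ultimately show ?thesis by (rule finite_subset)
qed

lemma D_Suc_0: "D 0 (Suc n) = Cons 1 ` D 0 n"
proof safe
  fix ys assume "ys \<in> D 0 (Suc n)"
  then obtain x zs where ys: "ys = x # zs" unfolding D_def by (cases ys) auto
  with \<open>ys \<in> D 0 (Suc n)\<close> have "odd x" "x \<le> 1" "zs \<in> D 0 n" unfolding D_def by auto
  then have "x = 1" by (cases x) auto
  then show "ys \<in> Cons 1 ` D 0 n" using ys \<open>zs \<in> D 0 n\<close> by auto
next
  fix zs assume "zs \<in> D 0 n"
  then show "1 # zs \<in> D 0 (Suc n)" unfolding D_def by auto
qed

lemma D_Suc_Suc: "D (Suc j) (Suc n) = Cons (2*Suc j+1) ` D (Suc j) n \<union> D j (Suc n)"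
proof safe
  fix ys assume a: "ys \<in> D (Suc j) (Suc n)" and b: "ys \<notin> D j (Suc n)"
  then obtain x zs where ys: "ys = x # zs" unfolding D_def by (cases ys) auto
  from a ys have ox: "odd x" "x \<le> 2*Suc j+1" "\<forall>z\<in>set zs. z \<le> x" unfolding D_def by auto
  have "x > 2*j+1"
  proof (rule ccontr)
    assume "\<not> x > 2*j+1"
    then have "ys \<in> D j (Suc n)" using a ys ox unfolding D_def by fastforce
    with b show False by simp
  qed
  with ox have "x = 2*Suc j+1" by presburger
  with a ys show "ys \<in> Cons (2*Suc j+1) ` D (Suc j) n" unfolding D_def by auto
next
  fix zs assume "zs \<in> D (Suc j) n"
  then show "(2*Suc j+1) # zs \<in> D (Suc j) (Suc n)" unfolding D_def by auto
next
  fix ys assume "ys \<in> D j (Suc n)"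
  then show "ys \<in> D (Suc j) (Suc n)" unfolding D_def by auto
qed

lemma D_card: "card (D k n) = (n + k) choose k"
proof (induction n arbitrary: k)
  case 0
  then show ?case by (simp add: D_0)
next
  case (Suc n)
  note IHn = Suc.IH
  show ?case
  proof (induction k)
    case 0
    then show ?case using IHn[of 0] by (simp add: D_Suc_0 card_image)
  next
    case (Suc j)
    have disj: "Cons (2*Suc j+1) ` D (Suc j) n \<inter> D j (Suc n) = {}"
    proof -
      have h: "\<And>zs. zs \<in> D j (Suc n) \<Longrightarrow> hd zs \<le> 2*j+1"
        unfolding D_def by (case_tac zs) auto
      show ?thesis
      proof (rule ccontr)
        assume "\<not> ?thesis"
        then obtain zs where "(2*Suc j+1) # zs \<in> D j (Suc n)" by blast
        from h[OF this] show False by simp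
      qed
    qed
    have "card (D (Suc j) (Suc n)) = card (Cons (2*Suc j+1) ` D (Suc j) n) + card (D j (Suc n))"
      unfolding D_Suc_Suc by (rule card_Un_disjoint[OF finite_imageI[OF D_fin] D_fin disj])
    also have "\<dots> = ((n + Suc j) choose Suc j) + ((Suc n + j) choose j)"
      using IHn[of "Suc j"] Suc.IH by (simp add: card_image)
    also have "\<dots> = (Suc n + Suc j) choose Suc j" by (simp add: add.commute)
    finally show ?case .
  qed
qed

lemma S_eq: "odd_parts_perimeter M =
  (\<lambda>(k,ys). (2*k+1) # ys) ` (SIGMA k:{k. 2*k \<le> M - 1 \<and> M \<ge> 1}. D k (M - 2*k - 1))"
proof (intro equalityI subsetI)
  fix xs assume xs: "xs \<in> odd_parts_perimeter M"
  then obtain x ys where e: "xs = x # ys" unfolding odd_parts_perimeter_def by (cases xs) auto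
  from xs e have ox: "odd x" unfolding odd_parts_perimeter_def by auto
  then obtain k where x: "x = 2*k+1" using oddE by blast
  from xs e x have pm: "2*k+1 + length ys = M" unfolding odd_parts_perimeter_def perimeter_def by auto
  from xs e x have "ys \<in> D k (M - 2*k - 1)" using pm
    unfolding odd_parts_perimeter_def D_def is_partition_def by auto
  moreover have "2*k \<le> M - 1" "M \<ge> 1" using pm by auto
  ultimately show "xs \<in> (\<lambda>(k,ys). (2*k+1) # ys) ` (SIGMA k:{k. 2*k \<le> M - 1 \<and> M \<ge> 1}. D k (M - 2*k - 1))"
    using e x by (auto intro!: image_eqI[where x="(k,ys)"])
next
  fix xs assume "xs \<in> (\<lambda>(k,ys). (2*k+1) # ys) ` (SIGMA k:{k. 2*k \<le> M - 1 \<and> M \<ge> 1}. D k (M - 2*k - 1))"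
  then obtain k ys where "xs = (2*k+1) # ys" "2*k \<le> M - 1" "M \<ge> 1" "ys \<in> D k (M - 2*k - 1)" by auto
  then show "xs \<in> odd_parts_perimeter M"
    unfolding odd_parts_perimeter_def D_def is_partition_def perimeter_def
    by (auto dest: odd_pos)
qed

theorem mainTheorem8:
  fixes M :: nat
  assumes "M \<ge> 1"
  shows "g M = (\<Sum>n | 2 * n \<le> M - 1. (M - 2 * n) * ((M - n - 1) choose n))"
proof -
  let ?K = "{k. 2*k \<le> M - 1 \<and> M \<ge> 1}"
  have K: "?K = {n. 2 * n \<le> M - 1}" using assms by auto
  have finK: "finite ?K" by (rule finite_subset[of _ "{..M}"]) auto
  have inj: "inj_on (\<lambda>(k,ys). (2*k+1) # ys) (SIGMA k:?K. D k (M - 2*k - 1))"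
    by (auto simp: inj_on_def)
  have "g M = (\<Sum>p\<in>(SIGMA k:?K. D k (M - 2*k - 1)). length ((\<lambda>(k,ys). (2*k+1) # ys) p))"
    unfolding g_def S_eq by (subst sum.reindex[OF inj]) simp
  also have "\<dots> = (\<Sum>k\<in>?K. \<Sum>ys\<in>D k (M - 2*k - 1). Suc (length ys))"
    using sum.Sigma[OF finK, of "\<lambda>k. D k (M - 2*k - 1)" "\<lambda>k ys. Suc (length ys)", symmetric]
    by (simp add: D_fin split_def)
  also have "\<dots> = (\<Sum>k\<in>?K. \<Sum>ys\<in>D k (M - 2*k - 1). M - 2*k)"
  proof (rule sum.cong[OF refl], rule sum.cong[OF refl])
    fix k ys assume "k \<in> ?K" "ys \<in> D k (M - 2*k - 1)"
    then have "length ys = M - 2*k - 1" "2*k \<le> M - 1" "M \<ge> 1" by (auto simp: D_def)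
    then show "Suc (length ys) = M - 2*k" by simp
  qed
  also have "\<dots> = (\<Sum>k\<in>?K. (M - 2*k) * ((M - k - 1) choose k))"
  proof (rule sum.cong)
    fix k assume "k \<in> ?K"
    then have "M - 2*k - 1 + k = M - k - 1" by auto
    then show "(\<Sum>ys\<in>D k (M - 2*k - 1). M - 2*k) = (M - 2*k) * ((M - k - 1) choose k)"
      by (simp add: D_card)
  qed simp
  finally show ?thesis using K by simp
qed

end
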